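(* Consider the network $\Sigma$ described in the context. The following assertions are equivalent: (i) $\Sigma$ is well-posed. (ii) $\Sigma$ is well-posed and there exist $C>0$ and $\kappa\in\mathcal{K}_\infty$ such that for all $x\in X$ and $u\in U$, $|f(x,u)|_\infty \le C+\kappa(|x|_\infty)+\kappa(|u|_\infty)$. (iii) There exist $C>0$ and $\kappa\in\mathcal{K}_\infty$ such that for all $i\in\mathbb{N}$ and all $x_i\in\mathbb{R}^{n_i}$, $\bar x_i\in X(I_i)$, $u_i\in\mathbb{R}^{p_i}$, $|f_i(x_i,\bar x_i,u_i)| \le C+\kappa(|x_i|)+\kappa(|\bar x_i|)+\kappa(|u_i|)$.
   Context: Let $\mathbb{N}=\{1,2,\dots\}$. For each $i\in\mathbb{N}$ fix positive integers $n_i,p_i$, norms $|\cdot|$ on $\mathbb{R}^{n_i}$ and on $\mathbb{R}^{p_i}$, and a finite set $I_i\subset\mathbb{N}\setminus\{i\}$, such that for every $i\in\mathbb{N}$ the set $\{j\in\mathbb{N}: i\in I_j\}$ is finite. Let $X(I_i):=\prod_{j\in I_i}\mathbb{R}^{n_j}$ with norm $|\bar x_i|:=\sup_{j\in I_i}|x_j|$ for $\bar x_i=(x_j)_{j\in I_i}$. For each $i$ let $f_i:\mathbb{R}^{n_i}\times X(I_i)\times\mathbb{R}^{p_i}\to\mathbb{R}^{n_i}$ be continuous (subsystem $\Sigma_i: x_i^+=f_i(x_i,\bar x_i,u_i)$). Let $X:=\{x=(x_i)_{i\in\mathbb{N}}: x_i\in\mathbb{R}^{n_i},\ \sup_i|x_i|<\infty\}$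 with norm $|x|_\infty:=\sup_i|x_i|$, and $U:=\{u=(u_i)_{i\in\mathbb{N}}: u_i\in\mathbb{R}^{p_i},\ \sup_i|u_i|<\infty\}$ with norm $|u|_\infty:=\sup_i|u_i|$. Let $X_E:=\prod_{i\in\mathbb{N}}\mathbb{R}^{n_i}$ and define $f:X_E\times U\to X_E$ by $f(x,u)_i:=f_i(x_i,(x_j)_{j\in I_i},u_i)$. The network $\Sigma$ is $x^+=f(x,u)$. $\Sigma$ is called well-posed if $f(x,u)\in X$ for all $x\in X$, $u\in U$. $\mathcal{K}_\infty$ denotes the continuous, strictly increasing, unbounded functions $\gamma:[0,\infty)\to[0,\infty)$ with $\gamma(0)=0$. *)

theory Defs
  imports "HOL-Analysis.Analysis"
begin

text \<open>R^n is modelled as the functions nat => real vanishing outside the indices below n.\<close>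
definition Vsp :: "nat \<Rightarrow> (nat \<Rightarrow> real) set" where
  "Vsp n = {v. \<forall>k\<ge>n. v k = 0}"

definition is_norm_on :: "nat \<Rightarrow> ((nat \<Rightarrow> real) \<Rightarrow> real) \<Rightarrow> bool" where
  "is_norm_on n N \<longleftrightarrow>
     (\<forall>v\<in>Vsp n. 0 \<le> N v \<and> (N v = 0 \<longleftrightarrow> v = (\<lambda>_. 0))) \<and>
     (\<forall>c v. v \<in> Vsp n \<longrightarrow> N (\<lambda>k. c * v k) = \<bar>c\<bar> * N v) \<and>
     (\<forall>v\<in>Vsp n. \<forall>w\<in>Vsp n. N (\<lambda>k. v k + w k) \<le> N v + N w)"

text \<open>X(I): families (y_j) indexed by j in I, y_j in R^(n_j); normalised to 0 outside I.\<close>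
definition Xbar :: "(nat \<Rightarrow> nat) \<Rightarrow> nat set \<Rightarrow> (nat \<Rightarrow> nat \<Rightarrow> real) set" where
  "Xbar n I = {y. (\<forall>j\<in>I. y j \<in> Vsp (n j)) \<and> (\<forall>j. j \<notin> I \<longrightarrow> y j = (\<lambda>_. 0))}"

text \<open>sup norm on X(I) (I finite; the empty supremum is 0).\<close>
definition barnorm :: "(nat \<Rightarrow> (nat \<Rightarrow> real) \<Rightarrow> real) \<Rightarrow> nat set \<Rightarrow> (nat \<Rightarrow> nat \<Rightarrow> real) \<Rightarrow> real" where
  "barnorm N I y = Max (insert 0 ((\<lambda>j. N j (y j)) ` I))"

definition restr :: "nat set \<Rightarrow> (nat \<Rightarrow> nat \<Rightarrow> real) \<Rightarrow> (nat \<Rightarrow> nat \<Rightarrow> real)" where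
  "restr I x = (\<lambda>j. if j \<in> I then x j else (\<lambda>_. 0))"

definition seqsp :: "(nat \<Rightarrow> nat) \<Rightarrow> (nat \<Rightarrow> (nat \<Rightarrow> real) \<Rightarrow> real) \<Rightarrow> (nat \<Rightarrow> nat \<Rightarrow> real) set" where
  "seqsp n N = {x. (\<forall>i. x i \<in> Vsp (n i)) \<and> (\<exists>B. \<forall>i. N i (x i) \<le> B)}"

definition supnorm :: "(nat \<Rightarrow> (nat \<Rightarrow> real) \<Rightarrow> real) \<Rightarrow> (nat \<Rightarrow> nat \<Rightarrow> real) \<Rightarrow> real" where
  "supnorm N x = (SUP i. N i (x i))"

definition netf ::
  "(nat \<Rightarrow> (nat \<Rightarrow> real) \<Rightarrow> (nat \<Rightarrow> nat \<Rightarrow> real) \<Rightarrow> (nat \<Rightarrow> real) \<Rightarrow> (nat \<Rightarrow> real))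
   \<Rightarrow> (nat \<Rightarrow> nat set) \<Rightarrow> (nat \<Rightarrow> nat \<Rightarrow> real) \<Rightarrow> (nat \<Rightarrow> nat \<Rightarrow> real) \<Rightarrow> (nat \<Rightarrow> nat \<Rightarrow> real)" where
  "netf fs I x u = (\<lambda>i. fs i (x i) (restr (I i) x) (u i))"

definition well_posed where
  "well_posed n p nx nu I fs \<longleftrightarrow>
     (\<forall>x\<in>seqsp n nx. \<forall>u\<in>seqsp p nu. netf fs I x u \<in> seqsp n nx)"

definition sub_continuous where
  "sub_continuous n p nx nu I i g \<longleftrightarrow>
     (\<forall>a\<in>Vsp (n i). \<forall>y\<in>Xbar n (I i). \<forall>w\<in>Vsp (p i). \<forall>\<epsilon>>0. \<exists>\<delta>>0.
        \<forall>a'\<in>Vsp (n i). \<forall>y'\<in>Xbar n (I i). \<forall>w'\<in>Vsp (p i).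
          nx i (a' - a) < \<delta> \<and> barnorm nx (I i) (y' - y) < \<delta> \<and> nu i (w' - w) < \<delta>
          \<longrightarrow> nx i (g a' y' w' - g a y w) < \<epsilon>)"

definition Kinf :: "(real \<Rightarrow> real) \<Rightarrow> bool" where
  "Kinf \<gamma> \<longleftrightarrow> continuous_on {0..} \<gamma> \<and> strict_mono_on {0..} \<gamma> \<and> \<gamma> 0 = 0 \<and>
     (\<forall>M. \<exists>r\<ge>0. \<gamma> r > M)"

end

theory Submission
  imports Defs
begin


lemma vsp_zero: "(\<lambda>_. 0) \<in> Vsp n" by (simp add: Vsp_def)
lemma vsp_add: "v \<in> Vsp n \<Longrightarrow> w \<in> Vsp n \<Longrightarrow> (\<lambda>k. v k + w k) \<in> Vsp n" by (simp add: Vsp_def)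
lemma vsp_diff: "v \<in> Vsp n \<Longrightarrow> w \<in> Vsp n \<Longrightarrow> v - w \<in> Vsp n" by (simp add: Vsp_def)
lemma vsp_scale: "v \<in> Vsp n \<Longrightarrow> (\<lambda>k. c * v k) \<in> Vsp n" by (simp add: Vsp_def)

lemma nrm_zero: "is_norm_on n N \<Longrightarrow> N (\<lambda>_. 0) = 0"
  unfolding is_norm_on_def using vsp_zero by blast
lemma nrm_nonneg: "is_norm_on n N \<Longrightarrow> v \<in> Vsp n \<Longrightarrow> 0 \<le> N v"
  unfolding is_norm_on_def by blast
lemma nrm_tri: "is_norm_on n N \<Longrightarrow> v \<in> Vsp n \<Longrightarrow> w \<in> Vsp n \<Longrightarrow> N (\<lambda>k. v k + w k) \<le> N v + N w"
  unfolding is_norm_on_def by blast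
lemma nrm_hom: "is_norm_on n N \<Longrightarrow> v \<in> Vsp n \<Longrightarrow> N (\<lambda>k. c * v k) = \<bar>c\<bar> * N v"
  unfolding is_norm_on_def by blast
lemma nrm_eq0: "is_norm_on n N \<Longrightarrow> v \<in> Vsp n \<Longrightarrow> N v = 0 \<Longrightarrow> v = (\<lambda>_. 0)"
  unfolding is_norm_on_def by blast

lemma nrm_le_diff: assumes "is_norm_on n N" "v \<in> Vsp n" "w \<in> Vsp n"
  shows "N v \<le> N (v - w) + N w"
proof -
  have "v = (\<lambda>k. (v - w) k + w k)" by auto
  then have "N v = N (\<lambda>k. (v - w) k + w k)" by simp
  also have "\<dots> \<le> N (v - w) + N w" using nrm_tri[OF assms(1) vsp_diff[OF assms(2,3)] assms(3)] .
  finally show ?thesis .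
qed

lemma nrm_sym: assumes "is_norm_on n N" "v \<in> Vsp n" "w \<in> Vsp n"
  shows "N (v - w) = N (w - v)"
proof -
  have "w - v = (\<lambda>k. (-1) * (v - w) k)" by auto
  then show ?thesis using nrm_hom[OF assms(1) vsp_diff[OF assms(2,3)], of "-1"] by simp
qed

lemma nrm_diff_le: assumes "is_norm_on n N" "v \<in> Vsp n" "w \<in> Vsp n"
  shows "N (v - w) \<le> N v + N w"
proof -
  have "v - w = (\<lambda>k. v k + (-1) * w k)" by auto
  then show ?thesis using nrm_tri[OF assms(1,2) vsp_scale[OF assms(3)], of "-1"]
      nrm_hom[OF assms(1,3), of "-1"] by simp
qed

definition ev :: "nat \<Rightarrow> nat \<Rightarrow> real" where "ev k = (\<lambda>t. if t = k then 1 else 0)"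

lemma nrm_upper: assumes N: "is_norm_on n N" and v: "v \<in> Vsp n"
  shows "N v \<le> (\<Sum>k<n. \<bar>v k\<bar> * N (ev k))"
proof -
  have H: "m \<le> n \<Longrightarrow> N (\<lambda>t. if t < m then v t else 0) \<le> (\<Sum>k<m. \<bar>v k\<bar> * N (ev k))" for m
  proof (induction m)
    case 0 then show ?case using nrm_zero[OF N] by simp
  next
    case (Suc m)
    let ?a = "\<lambda>t. if t < m then v t else 0"
    have e: "ev m \<in> Vsp n" using Suc.prems by (auto simp: Vsp_def ev_def)
    have a: "?a \<in> Vsp n" using v by (auto simp: Vsp_def)
    have eq: "(\<lambda>t. if t < Suc m then v t else 0) = (\<lambda>t. ?a t + v m * ev m t)"
      by (auto simp: ev_def fun_eq_iff less_Suc_eq)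
    have "N (\<lambda>t. ?a t + v m * ev m t) \<le> N ?a + N (\<lambda>t. v m * ev m t)"
      by (rule nrm_tri[OF N a vsp_scale[OF e]])
    also have "N (\<lambda>t. v m * ev m t) = \<bar>v m\<bar> * N (ev m)" by (rule nrm_hom[OF N e])
    finally show ?case using Suc by (simp add: eq)
  qed
  have "(\<lambda>t. if t < n then v t else 0) = v" using v by (auto simp: Vsp_def)
  then show ?thesis using H[OF order_refl] by simp
qed

lemma extract_sub:
  fixes X :: "nat \<Rightarrow> 'a \<Rightarrow> real"
  assumes "finite S" and "\<And>m t. t \<in> S \<Longrightarrow> \<bar>X m t\<bar> \<le> B"
  shows "\<exists>\<sigma>. strict_mono \<sigma> \<and> (\<forall>t\<in>S. \<exists>l. (\<lambda>m. X (\<sigma> m) t) \<longlonglongrightarrow> l)"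
  using assms
proof (induction S rule: finite_induct)
  case empty
  show ?case by (rule exI[of _ id]) (simp add: strict_mono_def)
next
  case (insert t S)
  then obtain \<sigma> where s: "strict_mono \<sigma>" "\<forall>t\<in>S. \<exists>l. (\<lambda>m. X (\<sigma> m) t) \<longlonglongrightarrow> l" by auto
  have "bounded (range (\<lambda>m. X (\<sigma> m) t))"
    using insert.prems by (auto simp: bounded_iff)
  then obtain l \<tau> where t: "strict_mono \<tau>" "((\<lambda>m. X (\<sigma> m) t) \<circ> \<tau>) \<longlonglongrightarrow> l"
    using bounded_imp_convergent_subsequence by blast
  show ?case
  proof (intro exI[of _ "\<sigma> \<circ> \<tau>"] conjI ballI)
    show "strict_mono (\<sigma> \<circ> \<tau>)" using s t strict_mono_o by blast
    fix t' assume "t' \<in> insert t S"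
    then show "\<exists>l. (\<lambda>m. X ((\<sigma> \<circ> \<tau>) m) t') \<longlonglongrightarrow> l"
    proof
      assume "t' = t" then show ?thesis using t by (auto simp: o_def)
    next
      assume "t' \<in> S"
      then obtain l' where "(\<lambda>m. X (\<sigma> m) t') \<longlonglongrightarrow> l'" using s by blast
      from LIMSEQ_subseq_LIMSEQ[OF this t(1)] show ?thesis by (auto simp: o_def)
    qed
  qed
qed

lemma nrm_conv:
  assumes N: "is_norm_on n N" and V: "\<And>m. V m \<in> Vsp n" and v: "v \<in> Vsp n"
    and L: "\<And>k. k < n \<Longrightarrow> (\<lambda>m. V m k) \<longlonglongrightarrow> v k"
  shows "(\<lambda>m. N (V m - v)) \<longlonglongrightarrow> 0"
proof (rule Lim_null_comparison)
  show "\<forall>\<^sub>F m in sequentially. norm (N (V m - v)) \<le> (\<Sum>k<n. \<bar>(V m - v) k\<bar> * N (ev k))"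
    using nrm_upper[OF N vsp_diff[OF V v]] nrm_nonneg[OF N vsp_diff[OF V v]] by simp
  have h: "(\<lambda>m. \<bar>(V m - v) k\<bar> * N (ev k)) \<longlonglongrightarrow> 0 * N (ev k)" if "k \<in> {..<n}" for k
    using that by (simp only: minus_apply, intro tendsto_mult tendsto_const tendsto_rabs_zero LIM_zero L) simp
  have "(\<lambda>m. \<Sum>k<n. \<bar>(V m - v) k\<bar> * N (ev k)) \<longlonglongrightarrow> (\<Sum>k<n. 0 * N (ev k))"
    by (rule tendsto_sum[OF h])
  then show "(\<lambda>m. \<Sum>k<n. \<bar>(V m - v) k\<bar> * N (ev k)) \<longlonglongrightarrow> 0" by simp
qed

lemma nrm_lower:
  assumes N: "is_norm_on n N"
  shows "\<exists>c>0. \<forall>v\<in>Vsp n. \<forall>k. \<bar>v k\<bar> \<le> c * N v"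
proof (rule ccontr)
  assume neg: "\<not> ?thesis"
  have "\<forall>m::nat. \<exists>v\<in>Vsp n. \<exists>k. \<bar>v k\<bar> > real (Suc m) * N v"
  proof
    fix m :: nat
    have "real (Suc m) > 0" by simp
    then show "\<exists>v\<in>Vsp n. \<exists>k. \<bar>v k\<bar> > real (Suc m) * N v" using neg by (meson not_le)
  qed
  then obtain V K where VK: "\<And>m. V m \<in> Vsp n" "\<And>m. \<bar>V m (K m)\<bar> > real (Suc m) * N (V m)"
    by (metis (no_types))
  have Kn: "K m < n" for m
  proof (rule ccontr)
    assume "\<not> K m < n"
    then have "V m (K m) = 0" using VK(1)[of m] by (auto simp: Vsp_def)
    moreover have "real (Suc m) * N (V m) \<ge> 0" using nrm_nonneg[OF N VK(1)[of m]] by simp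
    ultimately show False using VK(2)[of m] by simp
  qed
  define M where "M m = Max ((\<lambda>k. \<bar>V m k\<bar>) ` {..<n})" for m
  have MK: "\<bar>V m (K m)\<bar> \<le> M m" for m unfolding M_def using Kn by (intro Max_ge) auto
  have Mpos: "M m > 0" for m
  proof -
    have "real (Suc m) * N (V m) \<ge> 0" using nrm_nonneg[OF N VK(1)[of m]] by simp
    then show ?thesis using MK[of m] VK(2)[of m] by linarith
  qed
  have Min: "\<exists>k<n. M m = \<bar>V m k\<bar>" for m
  proof -
    have "M m \<in> (\<lambda>k. \<bar>V m k\<bar>) ` {..<n}" unfolding M_def using Kn[of m]
      by (intro Max_in) auto
    then show ?thesis by auto
  qed
  have Mge: "\<bar>V m k\<bar> \<le> M m" for m k
  proof (cases "k < n")
    case True then show ?thesis unfolding M_def by (intro Max_ge) auto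
  next
    case False then show ?thesis using VK(1)[of m] Mpos[of m] by (auto simp: Vsp_def)
  qed
  define W where "W m = (\<lambda>t. inverse (M m) * V m t)" for m
  have WV: "W m \<in> Vsp n" for m unfolding W_def by (rule vsp_scale[OF VK(1)])
  have Wb: "\<bar>W m t\<bar> \<le> 1" for m t
    using Mge[of m t] Mpos[of m] by (simp add: W_def abs_mult field_simps)
  have Ws: "(\<Sum>k<n. \<bar>W m k\<bar>) \<ge> 1" for m
  proof -
    obtain k where k: "k < n" "M m = \<bar>V m k\<bar>" using Min by blast
    have "\<bar>W m k\<bar> = 1" using k Mpos[of m] by (simp add: W_def abs_mult)
    moreover have "\<bar>W m k\<bar> \<le> (\<Sum>k<n. \<bar>W m k\<bar>)"
      using k by (intro member_le_sum) auto
    ultimately show ?thesis by simp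
  qed
  have WN: "N (W m) \<le> inverse (real (Suc m))" for m
  proof -
    have "N (W m) = inverse (M m) * N (V m)" unfolding W_def
      using nrm_hom[OF N VK(1)[of m]] Mpos[of m] by simp
    also have "\<dots> \<le> inverse (real (Suc m))"
      using VK(2)[of m] MK[of m] Mpos[of m] by (simp add: field_simps)
    finally show ?thesis .
  qed
  obtain \<sigma> where \<sigma>: "strict_mono \<sigma>" "\<forall>t\<in>{..<n}. \<exists>l. (\<lambda>m. W (\<sigma> m) t) \<longlonglongrightarrow> l"
    using extract_sub[of "{..<n}" W 1] Wb by blast
  from bchoice[OF \<sigma>(2)] obtain L where L0: "\<forall>t\<in>{..<n}. (\<lambda>m. W (\<sigma> m) t) \<longlonglongrightarrow> L t" by blast
  then have L: "\<And>t. t < n \<Longrightarrow> (\<lambda>m. W (\<sigma> m) t) \<longlonglongrightarrow> L t" by simp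
  define w where "w t = (if t < n then L t else 0)" for t
  have wV: "w \<in> Vsp n" by (auto simp: Vsp_def w_def)
  have Lw: "(\<lambda>m. W (\<sigma> m) t) \<longlonglongrightarrow> w t" if "t < n" for t using L that by (simp add: w_def)
  have c1: "(\<lambda>m. N (W (\<sigma> m) - w)) \<longlonglongrightarrow> 0"
    by (rule nrm_conv[OF N WV wV Lw])
  have c2: "(\<lambda>m. inverse (real (Suc (\<sigma> m)))) \<longlonglongrightarrow> 0"
    using LIMSEQ_subseq_LIMSEQ[OF LIMSEQ_inverse_real_of_nat \<sigma>(1)] by (simp add: o_def)
  have "N w \<le> 0"
  proof (rule LIMSEQ_le_const)
    show "(\<lambda>m. inverse (real (Suc (\<sigma> m))) + N (W (\<sigma> m) - w)) \<longlonglongrightarrow> 0"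
      using tendsto_add[OF c2 c1] by simp
    show "\<exists>M. \<forall>m\<ge>M. N w \<le> inverse (real (Suc (\<sigma> m))) + N (W (\<sigma> m) - w)"
    proof (intro exI allI impI)
      fix m
      have "N w \<le> N (w - W (\<sigma> m)) + N (W (\<sigma> m))" by (rule nrm_le_diff[OF N wV WV])
      then show "N w \<le> inverse (real (Suc (\<sigma> m))) + N (W (\<sigma> m) - w)"
        using WN[of "\<sigma> m"] nrm_sym[OF N wV WV] by simp
    qed
  qed
  then have "w = (\<lambda>_. 0)" using nrm_nonneg[OF N wV] nrm_eq0[OF N wV] by simp
  moreover have "1 \<le> (\<Sum>k<n. \<bar>w k\<bar>)"
  proof (rule LIMSEQ_le_const)
    show "(\<lambda>m. \<Sum>k<n. \<bar>W (\<sigma> m) k\<bar>) \<longlonglongrightarrow> (\<Sum>k<n. \<bar>w k\<bar>)"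
      by (intro tendsto_intros Lw) simp
    show "\<exists>M. \<forall>m\<ge>M. 1 \<le> (\<Sum>k<n. \<bar>W (\<sigma> m) k\<bar>)" using Ws by blast
  qed
  ultimately show False by simp
qed



lemma barnorm_nonneg: "finite I \<Longrightarrow> 0 \<le> barnorm N I y"
  unfolding barnorm_def by (intro Max_ge) auto

lemma barnorm_ge: "finite I \<Longrightarrow> j \<in> I \<Longrightarrow> N j (y j) \<le> barnorm N I y"
  unfolding barnorm_def by (intro Max_ge) auto

lemma barnorm_le_sum: assumes "finite I" "\<And>j. j \<in> I \<Longrightarrow> 0 \<le> N j (y j)"
  shows "barnorm N I y \<le> (\<Sum>j\<in>I. N j (y j))"
  unfolding barnorm_def using assms
  by (subst Max_le_iff) (auto intro: sum_nonneg member_le_sum)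

lemma barnorm_le: assumes "finite I" "0 \<le> B" "\<And>j. j \<in> I \<Longrightarrow> N j (y j) \<le> B"
  shows "barnorm N I y \<le> B"
  unfolding barnorm_def using assms by (subst Max_le_iff) auto

lemma per_i_bound:
  assumes Nn: "\<And>j. is_norm_on (n j) (nx j)" and Np: "is_norm_on (p i) (nu i)"
    and fin: "finite (I i)"
    and maps: "\<And>a y w. a \<in> Vsp (n i) \<Longrightarrow> y \<in> Xbar n (I i) \<Longrightarrow> w \<in> Vsp (p i)
                 \<Longrightarrow> g a y w \<in> Vsp (n i)"
    and cont: "sub_continuous n p nx nu I i g"
  shows "\<exists>B. \<forall>a\<in>Vsp (n i). \<forall>y\<in>Xbar n (I i). \<forall>w\<in>Vsp (p i).
           nx i a \<le> r \<longrightarrow> barnorm nx (I i) y \<le> r \<longrightarrow> nu i w \<le> r \<longrightarrow> nx i (g a y w) \<le> B"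
proof (rule ccontr)
  assume neg: "\<not> ?thesis"
  have "\<forall>m::nat. \<exists>a y w. a \<in> Vsp (n i) \<and> y \<in> Xbar n (I i) \<and> w \<in> Vsp (p i) \<and>
      nx i a \<le> r \<and> barnorm nx (I i) y \<le> r \<and> nu i w \<le> r \<and> nx i (g a y w) > real m"
    using neg by (meson not_le)
  then obtain A Y W where AYW: "\<And>m. A m \<in> Vsp (n i)" "\<And>m. Y m \<in> Xbar n (I i)" "\<And>m. W m \<in> Vsp (p i)"
    "\<And>m. nx i (A m) \<le> r" "\<And>m. barnorm nx (I i) (Y m) \<le> r" "\<And>m. nu i (W m) \<le> r"
    "\<And>m. nx i (g (A m) (Y m) (W m)) > real m"
    by (metis (no_types))
  have r0: "0 \<le> r" using AYW(4)[of 0] nrm_nonneg[OF Nn AYW(1)[of 0]] by simp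
  have "\<forall>j. \<exists>c>0. \<forall>v\<in>Vsp (n j). \<forall>k. \<bar>v k\<bar> \<le> c * nx j v" using nrm_lower[OF Nn] by blast
  then obtain c where c: "\<And>j. c j > 0" "\<And>j v k. v \<in> Vsp (n j) \<Longrightarrow> \<bar>v k\<bar> \<le> c j * nx j v"
    by metis
  obtain cw where cw: "cw > 0" "\<And>v k. v \<in> Vsp (p i) \<Longrightarrow> \<bar>v k\<bar> \<le> cw * nu i v"
    using nrm_lower[OF Np] by blast
  have Yj: "Y m j \<in> Vsp (n j)" if "j \<in> I i" for m j using AYW(2)[of m] that by (auto simp: Xbar_def)
  have Yo: "Y m j = (\<lambda>_. 0)" if "j \<notin> I i" for m j using AYW(2)[of m] that by (auto simp: Xbar_def)
  define B0 where "B0 = c i * r + cw * r + (\<Sum>j\<in>I i. c j * r)"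
  have cr: "0 \<le> c j * r" for j using c(1)[of j] r0 by simp
  have sB: "0 \<le> (\<Sum>j\<in>I i. c j * r)" using cr by (intro sum_nonneg) auto
  have cwr: "0 \<le> cw * r" using cw r0 by simp
  have bA: "\<bar>A m k\<bar> \<le> B0" for m k
  proof -
    have "\<bar>A m k\<bar> \<le> c i * nx i (A m)" by (rule c(2)[OF AYW(1)])
    also have "\<dots> \<le> c i * r" using AYW(4)[of m] c(1)[of i] by (simp add: mult_left_mono)
    finally show ?thesis unfolding B0_def using sB cwr by linarith
  qed
  have bW: "\<bar>W m k\<bar> \<le> B0" for m k
  proof -
    have "\<bar>W m k\<bar> \<le> cw * nu i (W m)" by (rule cw(2)[OF AYW(3)])
    also have "\<dots> \<le> cw * r" using AYW(6)[of m] cw(1) by (simp add: mult_left_mono)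
    finally show ?thesis unfolding B0_def using sB cr[of i] by linarith
  qed
  have bY: "\<bar>Y m j k\<bar> \<le> B0" if "j \<in> I i" for m j k
  proof -
    have "\<bar>Y m j k\<bar> \<le> c j * nx j (Y m j)" by (rule c(2)[OF Yj[OF that]])
    also have "\<dots> \<le> c j * r" using barnorm_ge[OF fin that, of nx "Y m"] AYW(5)[of m] c(1)[of j]
      by (simp add: mult_left_mono)
    also have "\<dots> \<le> (\<Sum>j\<in>I i. c j * r)" using that fin cr by (intro member_le_sum) auto
    finally show ?thesis unfolding B0_def using cr[of i] cwr by linarith
  qed
  define X where "X m t = (case t of Inl k \<Rightarrow> A m k | Inr (Inl (j, k)) \<Rightarrow> Y m j k | Inr (Inr k) \<Rightarrow> W m k)"
    for m and t :: "nat + (nat \<times> nat) + nat"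
  define S :: "(nat + (nat \<times> nat) + nat) set" where
    "S = Inl ` {..<n i} \<union> Inr ` (Inl ` (SIGMA j:I i. {..<n j}) \<union> Inr ` {..<p i})"
  have finS: "finite S" unfolding S_def using fin by auto
  have bX: "\<bar>X m t\<bar> \<le> B0" if "t \<in> S" for m t
    using that bA bW bY unfolding S_def X_def by auto
  obtain \<sigma> where \<sigma>: "strict_mono \<sigma>" "\<forall>t\<in>S. \<exists>l. (\<lambda>m. X (\<sigma> m) t) \<longlonglongrightarrow> l"
    using extract_sub[of S X B0, OF finS] bX by blast
  from bchoice[OF \<sigma>(2)] obtain L where L: "\<forall>t\<in>S. (\<lambda>m. X (\<sigma> m) t) \<longlonglongrightarrow> L t" by blast
  define a where "a k = (if k < n i then L (Inl k) else 0)" for k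
  define w where "w k = (if k < p i then L (Inr (Inr k)) else 0)" for k
  define y where "y j k = (if j \<in> I i \<and> k < n j then L (Inr (Inl (j, k))) else 0)" for j k
  have aV: "a \<in> Vsp (n i)" by (auto simp: Vsp_def a_def)
  have wV: "w \<in> Vsp (p i)" by (auto simp: Vsp_def w_def)
  have yX: "y \<in> Xbar n (I i)" by (auto simp: Xbar_def Vsp_def y_def)
  have yj: "y j \<in> Vsp (n j)" for j by (auto simp: Vsp_def y_def)
  have ca: "(\<lambda>m. nx i (A (\<sigma> m) - a)) \<longlonglongrightarrow> 0"
  proof (rule nrm_conv[OF Nn AYW(1) aV])
    fix k assume "k < n i"
    then have "Inl k \<in> S" by (simp add: S_def)
    then have "(\<lambda>m. X (\<sigma> m) (Inl k)) \<longlonglongrightarrow> L (Inl k)" using L by blast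
    then show "(\<lambda>m. A (\<sigma> m) k) \<longlonglongrightarrow> a k" using \<open>k < n i\<close> by (simp add: X_def a_def)
  qed
  have cw': "(\<lambda>m. nu i (W (\<sigma> m) - w)) \<longlonglongrightarrow> 0"
  proof (rule nrm_conv[OF Np AYW(3) wV])
    fix k assume "k < p i"
    then have "Inr (Inr k) \<in> S" by (simp add: S_def)
    then have "(\<lambda>m. X (\<sigma> m) (Inr (Inr k))) \<longlonglongrightarrow> L (Inr (Inr k))" using L by blast
    then show "(\<lambda>m. W (\<sigma> m) k) \<longlonglongrightarrow> w k" using \<open>k < p i\<close> by (simp add: X_def w_def)
  qed
  have cyj: "(\<lambda>m. nx j (Y (\<sigma> m) j - y j)) \<longlonglongrightarrow> 0" if j: "j \<in> I i" for j
  proof (rule nrm_conv[OF Nn Yj[OF j] yj])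
    fix k assume "k < n j"
    then have "Inr (Inl (j, k)) \<in> S" using j by (simp add: S_def)
    then have "(\<lambda>m. X (\<sigma> m) (Inr (Inl (j, k)))) \<longlonglongrightarrow> L (Inr (Inl (j, k)))" using L by blast
    then show "(\<lambda>m. Y (\<sigma> m) j k) \<longlonglongrightarrow> y j k" using \<open>k < n j\<close> j by (simp add: X_def y_def)
  qed
  have cy: "(\<lambda>m. barnorm nx (I i) (Y (\<sigma> m) - y)) \<longlonglongrightarrow> 0"
  proof (rule Lim_null_comparison)
    have "norm (barnorm nx (I i) (Y (\<sigma> m) - y)) \<le> (\<Sum>j\<in>I i. nx j ((Y (\<sigma> m) - y) j))" for m
    proof -
      have nn: "0 \<le> nx j ((Y (\<sigma> m) - y) j)" if "j \<in> I i" for j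
        using nrm_nonneg[OF Nn vsp_diff[OF Yj[OF that] yj]] by simp
      show ?thesis using barnorm_nonneg[OF fin] barnorm_le_sum[of "I i" nx "Y (\<sigma> m) - y", OF fin nn] by simp
    qed
    then show "\<forall>\<^sub>F m in sequentially. norm (barnorm nx (I i) (Y (\<sigma> m) - y)) \<le> (\<Sum>j\<in>I i. nx j ((Y (\<sigma> m) - y) j))"
      by simp
    have "(\<lambda>m. \<Sum>j\<in>I i. nx j ((Y (\<sigma> m) - y) j)) \<longlonglongrightarrow> (\<Sum>j\<in>I i. 0)"
      by (intro tendsto_sum) (simp add: cyj)
    then show "(\<lambda>m. \<Sum>j\<in>I i. nx j ((Y (\<sigma> m) - y) j)) \<longlonglongrightarrow> 0" by simp
  qed
  obtain \<delta> where \<delta>: "\<delta> > 0" "\<And>a' y' w'. a' \<in> Vsp (n i) \<Longrightarrow> y' \<in> Xbar n (I i) \<Longrightarrow> w' \<in> Vsp (p i) \<Longrightarrow>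
      nx i (a' - a) < \<delta> \<Longrightarrow> barnorm nx (I i) (y' - y) < \<delta> \<Longrightarrow> nu i (w' - w) < \<delta>
      \<Longrightarrow> nx i (g a' y' w' - g a y w) < 1"
    using cont aV yX wV unfolding sub_continuous_def
    by (metis zero_less_one)
  have ev1: "\<forall>\<^sub>F m in sequentially. nx i (A (\<sigma> m) - a) < \<delta>" using order_tendstoD(2)[OF ca \<delta>(1)] .
  have ev2: "\<forall>\<^sub>F m in sequentially. barnorm nx (I i) (Y (\<sigma> m) - y) < \<delta>" using order_tendstoD(2)[OF cy \<delta>(1)] .
  have ev3: "\<forall>\<^sub>F m in sequentially. nu i (W (\<sigma> m) - w) < \<delta>" using order_tendstoD(2)[OF cw' \<delta>(1)] .
  have ev4: "\<forall>\<^sub>F m in sequentially. real m \<ge> nx i (g a y w) + 1"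
    by (rule eventually_sequentiallyI[of "nat \<lceil>nx i (g a y w) + 1\<rceil>"]) linarith
  obtain m where m: "nx i (A (\<sigma> m) - a) < \<delta>" "barnorm nx (I i) (Y (\<sigma> m) - y) < \<delta>"
    "nu i (W (\<sigma> m) - w) < \<delta>" "real m \<ge> nx i (g a y w) + 1"
    using eventually_happens'[OF _ eventually_conj[OF ev1 eventually_conj[OF ev2 eventually_conj[OF ev3 ev4]]]]
    by auto
  have gm: "g (A (\<sigma> m)) (Y (\<sigma> m)) (W (\<sigma> m)) \<in> Vsp (n i)" by (rule maps[OF AYW(1-3)])
  have g0: "g a y w \<in> Vsp (n i)" by (rule maps[OF aV yX wV])
  have "nx i (g (A (\<sigma> m)) (Y (\<sigma> m)) (W (\<sigma> m))) \<le>
      nx i (g (A (\<sigma> m)) (Y (\<sigma> m)) (W (\<sigma> m)) - g a y w) + nx i (g a y w)"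
    by (rule nrm_le_diff[OF Nn gm g0])
  also have "\<dots> < 1 + nx i (g a y w)" using \<delta>(2)[OF AYW(1-3) m(1-3)] by simp
  finally have "nx i (g (A (\<sigma> m)) (Y (\<sigma> m)) (W (\<sigma> m))) < real m" using m(4) by simp
  moreover have "real m \<le> real (\<sigma> m)" using seq_suble[OF \<sigma>(1)] by simp
  ultimately show False using AYW(7)[of "\<sigma> m"] by simp
qed



primrec usedset :: "(nat set \<Rightarrow> nat \<Rightarrow> nat) \<Rightarrow> (nat \<Rightarrow> nat set) \<Rightarrow> nat \<Rightarrow> nat set" where
  "usedset h I 0 = {}"
| "usedset h I (Suc k) = usedset h I k \<union> insert (h (usedset h I k) k) (I (h (usedset h I k) k))"

lemma usedset_finite: "(\<And>i. finite (I i)) \<Longrightarrow> finite (usedset h I k)"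
  by (induction k) auto

lemma usedset_mono: "k \<le> l \<Longrightarrow> usedset h I k \<subseteq> usedset h I l"
proof (induction l)
  case 0 then show ?case by simp
next
  case (Suc l) then show ?case by (auto simp: le_Suc_eq)
qed

lemma usedset_D: "k < l \<Longrightarrow> insert (h (usedset h I k) k) (I (h (usedset h I k) k)) \<subseteq> usedset h I l"
  using usedset_mono[of "Suc k" l h I] by auto

lemma uniform_bound:
  fixes n p :: "nat \<Rightarrow> nat"
    and nx nu :: "nat \<Rightarrow> (nat \<Rightarrow> real) \<Rightarrow> real"
    and I :: "nat \<Rightarrow> nat set"
    and fs :: "nat \<Rightarrow> (nat \<Rightarrow> real) \<Rightarrow> (nat \<Rightarrow> nat \<Rightarrow> real) \<Rightarrow> (nat \<Rightarrow> real) \<Rightarrow> (nat \<Rightarrow> real)"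
  assumes Nn: "\<And>i. is_norm_on (n i) (nx i)" and Np: "\<And>i. is_norm_on (p i) (nu i)"
    and fin: "\<And>i. finite (I i)"
    and irr: "\<And>i. i \<notin> I i"
    and finrev: "\<And>i. finite {j. i \<in> I j}"
    and maps: "\<And>i a y w. a \<in> Vsp (n i) \<Longrightarrow> y \<in> Xbar n (I i) \<Longrightarrow> w \<in> Vsp (p i)
                 \<Longrightarrow> fs i a y w \<in> Vsp (n i)"
    and cont: "\<And>i. sub_continuous n p nx nu I i (fs i)"
    and wp: "well_posed n p nx nu I fs"
  shows "\<exists>B. \<forall>i. \<forall>a\<in>Vsp (n i). \<forall>y\<in>Xbar n (I i). \<forall>w\<in>Vsp (p i).
           nx i a \<le> r \<longrightarrow> barnorm nx (I i) y \<le> r \<longrightarrow> nu i w \<le> r \<longrightarrow> nx i (fs i a y w) \<le> B"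
proof (rule ccontr)
  assume neg: "\<not> ?thesis"
  have "\<forall>i. \<exists>B. \<forall>a\<in>Vsp (n i). \<forall>y\<in>Xbar n (I i). \<forall>w\<in>Vsp (p i).
           nx i a \<le> r \<longrightarrow> barnorm nx (I i) y \<le> r \<longrightarrow> nu i w \<le> r \<longrightarrow> nx i (fs i a y w) \<le> B"
    using per_i_bound[OF Nn Np fin maps cont] by blast
  from choice[OF this] obtain Bi where Bi0: "\<forall>i. \<forall>a\<in>Vsp (n i). \<forall>y\<in>Xbar n (I i). \<forall>w\<in>Vsp (p i).
           nx i a \<le> r \<longrightarrow> barnorm nx (I i) y \<le> r \<longrightarrow> nu i w \<le> r \<longrightarrow> nx i (fs i a y w) \<le> Bi i"
    by blast
  have Bi: "\<And>i a y w. a\<in>Vsp (n i) \<Longrightarrow> y\<in>Xbar n (I i) \<Longrightarrow> w\<in>Vsp (p i) \<Longrightarrow>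
           nx i a \<le> r \<Longrightarrow> barnorm nx (I i) y \<le> r \<Longrightarrow> nu i w \<le> r \<Longrightarrow> nx i (fs i a y w) \<le> Bi i"
    using Bi0 by blast
  define Q where "Q S k i a y w \<longleftrightarrow> a \<in> Vsp (n i) \<and> y \<in> Xbar n (I i) \<and> w \<in> Vsp (p i) \<and>
      nx i a \<le> r \<and> barnorm nx (I i) y \<le> r \<and> nu i w \<le> r \<and> nx i (fs i a y w) > real k \<and>
      i \<notin> S \<and> I i \<inter> S = {}" for S k i a y w
  define P where "P S k t \<longleftrightarrow> Q S k (fst t) (fst (snd t)) (fst (snd (snd t))) (snd (snd (snd t)))"
    for S k and t :: "nat \<times> (nat \<Rightarrow> real) \<times> (nat \<Rightarrow> nat \<Rightarrow> real) \<times> (nat \<Rightarrow> real)"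
  have exP: "\<exists>t. P S k t" if finS: "finite S" for S k
  proof -
    define Bad where "Bad = S \<union> (\<Union>j\<in>S. {i. j \<in> I i})"
    have finB: "finite Bad" unfolding Bad_def using finS finrev by auto
    define B where "B = real k + (\<Sum>i\<in>Bad. \<bar>Bi i\<bar>)"
    obtain i a y w where w: "a\<in>Vsp (n i)" "y\<in>Xbar n (I i)" "w\<in>Vsp (p i)"
      "nx i a \<le> r" "barnorm nx (I i) y \<le> r" "nu i w \<le> r" "nx i (fs i a y w) > B"
      using neg by (meson not_le)
    have "i \<notin> Bad"
    proof
      assume iB: "i \<in> Bad"
      have "nx i (fs i a y w) \<le> \<bar>Bi i\<bar>" using Bi[OF w(1-6)] by simp
      also have "\<dots> \<le> (\<Sum>i\<in>Bad. \<bar>Bi i\<bar>)" using iB finB by (intro member_le_sum) auto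
      finally show False using w(7) unfolding B_def by simp
    qed
    then have "i \<notin> S" "I i \<inter> S = {}" unfolding Bad_def by auto
    moreover have "nx i (fs i a y w) > real k"
    proof -
      have "0 \<le> (\<Sum>i\<in>Bad. \<bar>Bi i\<bar>)" by (intro sum_nonneg) auto
      then show ?thesis using w(7) unfolding B_def by linarith
    qed
    ultimately have "P S k (i, a, y, w)" unfolding P_def Q_def using w by simp
    then show ?thesis by blast
  qed
  define ch where "ch S k = (SOME t. P S k t)" for S k
  define h where "h S k = fst (ch S k)" for S k
  define U where "U k = usedset h I k" for k
  define T where "T k = ch (U k) k" for k
  define ii where "ii k = fst (T k)" for k
  define aa where "aa k = fst (snd (T k))" for k
  define yy where "yy k = fst (snd (snd (T k)))" for k
  define ww where "ww k = snd (snd (snd (T k)))" for k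
  have PT: "P (U k) k (T k)" for k
  proof -
    have "finite (U k)" unfolding U_def by (rule usedset_finite[OF fin])
    from exP[OF this] obtain t where "P (U k) k t" by blast
    then have "P (U k) k (SOME t. P (U k) k t)" by (rule someI)
    then show ?thesis unfolding T_def ch_def .
  qed
  have QT: "Q (U k) k (ii k) (aa k) (yy k) (ww k)" for k
    using PT[of k] unfolding P_def ii_def aa_def yy_def ww_def by simp
  have iiU: "h (U k) k = ii k" for k unfolding h_def ii_def T_def by simp
  have Dsub: "insert (ii k) (I (ii k)) \<subseteq> U l" if "k < l" for k l
    using usedset_D[OF that, of h I] iiU[of k] unfolding U_def by simp
  have disj: "insert (ii k) (I (ii k)) \<inter> insert (ii l) (I (ii l)) = {}" if "k < l" for k l
  proof -
    have "ii l \<notin> U l \<and> I (ii l) \<inter> U l = {}" using QT[of l] unfolding Q_def by (elim conjE) (intro conjI)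
    then have "insert (ii l) (I (ii l)) \<inter> U l = {}" by simp
    with Dsub[OF that] show ?thesis by blast
  qed
  have uniq: "k = l" if "j \<in> insert (ii k) (I (ii k))" "j \<in> insert (ii l) (I (ii l))" for j k l
  proof (rule ccontr)
    assume "k \<noteq> l"
    then have "k < l \<or> l < k" by arith
    then show False using disj that by blast
  qed
  have Q1_1: "aa k \<in> Vsp (n (ii k))" for k using QT[of k] unfolding Q_def by (elim conjE)
  have Q1_2: "yy k \<in> Xbar n (I (ii k))" for k using QT[of k] unfolding Q_def by (elim conjE)
  have Q1_3: "ww k \<in> Vsp (p (ii k))" for k using QT[of k] unfolding Q_def by (elim conjE)
  have Q1_4: "nx (ii k) (aa k) \<le> r" for k using QT[of k] unfolding Q_def by (elim conjE)
  have Q1_5: "barnorm nx (I (ii k)) (yy k) \<le> r" for k using QT[of k] unfolding Q_def by (elim conjE)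
  have Q1_6: "nu (ii k) (ww k) \<le> r" for k using QT[of k] unfolding Q_def by (elim conjE)
  have Q1_7: "nx (ii k) (fs (ii k) (aa k) (yy k) (ww k)) > real k" for k using QT[of k] unfolding Q_def by (elim conjE)
  note Q1 = Q1_1 Q1_2 Q1_3 Q1_4 Q1_5 Q1_6 Q1_7
  have r0: "0 \<le> r" using Q1(4)[of 0] nrm_nonneg[OF Nn Q1(1)[of 0]] by simp
  define D where "D k = insert (ii k) (I (ii k))" for k
  define x where "x j = (if \<exists>k. j \<in> D k then (let k = SOME k. j \<in> D k in
       if j = ii k then aa k else yy k j) else (\<lambda>_. 0))" for j
  define u where "u j = (if \<exists>k. j \<in> D k then (let k = SOME k. j \<in> D k in
       if j = ii k then ww k else (\<lambda>_. 0)) else (\<lambda>_. 0))" for j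
  have some_eq: "(SOME k. j \<in> D k) = k" if "j \<in> D k" for j k
  proof -
    have "j \<in> D (SOME k. j \<in> D k)" using that by (rule someI)
    then show ?thesis using uniq that unfolding D_def by blast
  qed
  have x_ii: "x (ii k) = aa k" for k
  proof -
    have "ii k \<in> D k" by (simp add: D_def)
    then show ?thesis unfolding x_def using some_eq by auto
  qed
  have u_ii: "u (ii k) = ww k" for k
  proof -
    have "ii k \<in> D k" by (simp add: D_def)
    then show ?thesis unfolding u_def using some_eq by auto
  qed
  have x_I: "x j = yy k j" if "j \<in> I (ii k)" for j k
  proof -
    have jD: "j \<in> D k" using that by (simp add: D_def)
    have "j \<noteq> ii k" using that irr by auto
    then show ?thesis unfolding x_def using some_eq[OF jD] jD by auto
  qed
  have restr_ii: "restr (I (ii k)) x = yy k" for k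
  proof
    fix j show "restr (I (ii k)) x j = yy k j"
      using x_I[of j k] Q1(2)[of k] by (auto simp: restr_def Xbar_def)
  qed
  have xj: "x j \<in> Vsp (n j) \<and> nx j (x j) \<le> r" for j
  proof -
    show "x j \<in> Vsp (n j) \<and> nx j (x j) \<le> r"
    proof (cases "\<exists>k. j \<in> D k")
      case True
      then obtain k where k: "j \<in> D k" by blast
      show ?thesis
      proof (cases "j = ii k")
        case True then show ?thesis using x_ii[of k] Q1(1,4)[of k] by simp
      next
        case False
        then have jI: "j \<in> I (ii k)" using k by (simp add: D_def)
        then show ?thesis using x_I[OF jI] Q1(2,5)[of k] barnorm_ge[OF fin jI, of nx "yy k"]
          by (auto simp: Xbar_def)
      qed
    next
      case False
      then show ?thesis unfolding x_def using nrm_zero[OF Nn] r0 by (simp add: vsp_zero)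
    qed
  qed
  have xs: "x \<in> seqsp n nx" unfolding seqsp_def using xj by blast
  have uj: "u j \<in> Vsp (p j) \<and> nu j (u j) \<le> r" for j
  proof (cases "\<exists>k. j \<in> D k")
    case True
    then obtain k where k: "j \<in> D k" by blast
    show ?thesis
    proof (cases "j = ii k")
      case True then show ?thesis using u_ii[of k] Q1(3,6)[of k] by simp
    next
      case False
      then have "u j = (\<lambda>_. 0)" using some_eq[OF k] k unfolding u_def by (auto simp: Let_def)
      then show ?thesis using nrm_zero[OF Np] r0 by (simp add: vsp_zero)
    qed
  next
    case False
    then show ?thesis unfolding u_def using nrm_zero[OF Np] r0 by (simp add: vsp_zero)
  qed
  have us: "u \<in> seqsp p nu" unfolding seqsp_def using uj by blast
  have "netf fs I x u \<in> seqsp n nx" using wp xs us unfolding well_posed_def by blast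
  then obtain B' where B': "\<And>j. nx j (netf fs I x u j) \<le> B'" unfolding seqsp_def by blast
  define k where "k = nat \<lceil>B'\<rceil>"
  have "B' \<le> real k" unfolding k_def by linarith
  moreover have "netf fs I x u (ii k) = fs (ii k) (aa k) (yy k) (ww k)"
    by (simp add: netf_def x_ii u_ii restr_ii)
  ultimately show False using B'[of "ii k"] Q1(7)[of k] by simp
qed



definition Lf :: "(nat \<Rightarrow> real) \<Rightarrow> nat \<Rightarrow> real \<Rightarrow> real" where
  "Lf e N r = (\<Sum>j<N. e j * min 1 (max 0 (r - real j)))"

definition Lk :: "(nat \<Rightarrow> real) \<Rightarrow> real \<Rightarrow> real" where
  "Lk e r = Lf e (nat \<lceil>r\<rceil>) r"

lemma Lf_stable: assumes "r \<le> real N" shows "Lf e (N + d) r = Lf e N r"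
proof (induction d)
  case 0 then show ?case by simp
next
  case (Suc d)
  have "min 1 (max 0 (r - real (N + d))) = 0" using assms by simp
  then show ?case using Suc by (simp add: Lf_def)
qed

lemma Lk_eq: assumes "r \<le> real N" shows "Lk e r = Lf e N r"
proof -
  have N: "nat \<lceil>r\<rceil> \<le> N" using assms by linarith
  have r1: "r \<le> real (nat \<lceil>r\<rceil>)" by linarith
  have "Lf e N r = Lf e (nat \<lceil>r\<rceil> + (N - nat \<lceil>r\<rceil>)) r" using N by simp
  also have "\<dots> = Lf e (nat \<lceil>r\<rceil>) r" by (rule Lf_stable[OF r1])
  finally show ?thesis by (simp add: Lk_def)
qed

lemma Lf_mono: assumes "\<And>j. 0 \<le> e j" "r \<le> s" shows "Lf e N r \<le> Lf e N s"
  unfolding Lf_def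
proof (rule sum_mono)
  fix j
  have "min 1 (max 0 (r - real j)) \<le> min 1 (max 0 (s - real j))" using assms(2) by simp
  then show "e j * min 1 (max 0 (r - real j)) \<le> e j * min 1 (max 0 (s - real j))"
    using assms(1)[of j] by (rule mult_left_mono)
qed

lemma Lk_mono: assumes "\<And>j. 0 \<le> e j" "r \<le> s" shows "Lk e r \<le> Lk e s"
proof -
  define N where "N = nat \<lceil>\<bar>r\<bar> + \<bar>s\<bar>\<rceil>"
  have "r \<le> real N" "s \<le> real N" unfolding N_def by linarith+
  then show ?thesis using Lk_eq[where r=r and N=N and e=e] Lk_eq[where r=s and N=N and e=e] Lf_mono[where N=N, OF assms] by simp
qed

lemma Lk_0: "Lk e 0 = 0" by (simp add: Lk_def Lf_def)

lemma Lk_lower: assumes "\<And>j. 0 \<le> e j" "real k \<le> r" shows "(\<Sum>j<k. e j) \<le> Lk e r"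
proof -
  define N where "N = max k (nat \<lceil>r\<rceil>)"
  have rN: "r \<le> real N" unfolding N_def by linarith
  have kN: "k \<le> N" unfolding N_def by simp
  have "(\<Sum>j<k. e j) = Lf e k r" unfolding Lf_def
  proof (rule sum.cong)
    fix j assume "j \<in> {..<k}"
    then have "r - real j \<ge> 1" using assms(2) by simp
    then show "e j = e j * min 1 (max 0 (r - real j))" by simp
  qed simp
  also have "\<dots> \<le> Lf e N r" unfolding Lf_def
    using kN assms(1) by (intro sum_mono2) auto
  also have "\<dots> = Lk e r" using Lk_eq[OF rN] by simp
  finally show ?thesis .
qed

lemma Lk_cont: "isCont (Lk e) r0"
proof -
  define N where "N = nat \<lceil>r0 + 1\<rceil>"
  have "\<forall>\<^sub>F x in nhds r0. Lk e x = Lf e N x"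
  proof -
    have "\<forall>\<^sub>F x in nhds r0. x \<in> {..<r0 + 1}" by (rule eventually_nhds_in_open) auto
    then show ?thesis
    proof (rule eventually_mono)
      fix x assume "x \<in> {..<r0 + 1}"
      then have "x \<le> real N" unfolding N_def by simp linarith
      then show "Lk e x = Lf e N x" by (rule Lk_eq)
    qed
  qed
  moreover have "isCont (Lf e N) r0" unfolding Lf_def by (intro continuous_intros)
  ultimately show ?thesis using isCont_cong by blast
qed

lemma Kinf_dominate:
  assumes "\<And>j. 0 \<le> e j"
  shows "Kinf (\<lambda>r. r + Lk e r)" and "\<And>k r. real k \<le> r \<Longrightarrow> (\<Sum>j<k. e j) \<le> r + Lk e r"
    and "\<And>r. 0 \<le> r \<Longrightarrow> 0 \<le> r + Lk e r"
proof -
  have nn: "0 \<le> Lk e r" if "0 \<le> r" for r using Lk_mono[OF assms that] Lk_0 by simp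
  show "\<And>r. 0 \<le> r \<Longrightarrow> 0 \<le> r + Lk e r" using nn by simp
  show "\<And>k r. real k \<le> r \<Longrightarrow> (\<Sum>j<k. e j) \<le> r + Lk e r"
  proof -
    fix k r assume kr: "real k \<le> r"
    have "(\<Sum>j<k. e j) \<le> Lk e r" by (rule Lk_lower[OF assms kr])
    moreover have "0 \<le> r" using kr of_nat_0_le_iff[of k] by linarith
    ultimately show "(\<Sum>j<k. e j) \<le> r + Lk e r" by linarith
  qed
  show "Kinf (\<lambda>r. r + Lk e r)" unfolding Kinf_def
  proof (intro conjI)
    show "continuous_on {0..} (\<lambda>r. r + Lk e r)"
      by (intro continuous_at_imp_continuous_on ballI continuous_intros Lk_cont)
    show "strict_mono_on {0..} (\<lambda>r. r + Lk e r)"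
    proof (rule strict_mono_onI)
      fix r s :: real assume "r < s"
      then have "Lk e r \<le> Lk e s" using Lk_mono[OF assms] by simp
      then show "r + Lk e r < s + Lk e s" using \<open>r < s\<close> by linarith
    qed
    show "0 + Lk e 0 = 0" by (simp add: Lk_0)
    show "\<forall>M. \<exists>r\<ge>0. M < r + Lk e r"
    proof
      fix M :: real
      show "\<exists>r\<ge>0. M < r + Lk e r"
        using nn[of "\<bar>M\<bar> + 1"] by (intro exI[of _ "\<bar>M\<bar> + 1"]) auto
    qed
  qed
qed



lemma iii_from_wp:
  fixes n p :: "nat \<Rightarrow> nat"
    and nx nu :: "nat \<Rightarrow> (nat \<Rightarrow> real) \<Rightarrow> real"
    and I :: "nat \<Rightarrow> nat set"
    and fs :: "nat \<Rightarrow> (nat \<Rightarrow> real) \<Rightarrow> (nat \<Rightarrow> nat \<Rightarrow> real) \<Rightarrow> (nat \<Rightarrow> real) \<Rightarrow> (nat \<Rightarrow> real)"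
  assumes Nn: "\<And>i. is_norm_on (n i) (nx i)" and Np: "\<And>i. is_norm_on (p i) (nu i)"
    and fin: "\<And>i. finite (I i)"
    and irr: "\<And>i. i \<notin> I i"
    and finrev: "\<And>i. finite {j. i \<in> I j}"
    and maps: "\<And>i a y w. a \<in> Vsp (n i) \<Longrightarrow> y \<in> Xbar n (I i) \<Longrightarrow> w \<in> Vsp (p i)
                 \<Longrightarrow> fs i a y w \<in> Vsp (n i)"
    and cont: "\<And>i. sub_continuous n p nx nu I i (fs i)"
    and wp: "well_posed n p nx nu I fs"
  shows "\<exists>C>0. \<exists>\<kappa>. Kinf \<kappa> \<and>
               (\<forall>i. \<forall>a\<in>Vsp (n i). \<forall>y\<in>Xbar n (I i). \<forall>w\<in>Vsp (p i).
                  nx i (fs i a y w) \<le> C + \<kappa> (nx i a) + \<kappa> (barnorm nx (I i) y) + \<kappa> (nu i w))"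
proof -
  have "\<forall>m::nat. \<exists>B. \<forall>i. \<forall>a\<in>Vsp (n i). \<forall>y\<in>Xbar n (I i). \<forall>w\<in>Vsp (p i).
           nx i a \<le> real m \<longrightarrow> barnorm nx (I i) y \<le> real m \<longrightarrow> nu i w \<le> real m \<longrightarrow> nx i (fs i a y w) \<le> B"
    using uniform_bound[OF Nn Np fin irr finrev maps cont wp] by blast
  from choice[OF this] obtain Bd where Bd0: "\<forall>m. \<forall>i. \<forall>a\<in>Vsp (n i). \<forall>y\<in>Xbar n (I i). \<forall>w\<in>Vsp (p i).
           nx i a \<le> real m \<longrightarrow> barnorm nx (I i) y \<le> real m \<longrightarrow> nu i w \<le> real m \<longrightarrow> nx i (fs i a y w) \<le> Bd m"
    by blast
  define e where "e j = \<bar>Bd (Suc (Suc j))\<bar>" for j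
  have e0: "0 \<le> e j" for j by (simp add: e_def)
  define \<kappa> where "\<kappa> = (\<lambda>r. r + Lk e r)"
  have K: "Kinf \<kappa>" unfolding \<kappa>_def by (rule Kinf_dominate(1)[OF e0])
  have Klow: "real k \<le> r \<Longrightarrow> (\<Sum>j<k. e j) \<le> \<kappa> r" for k r
    unfolding \<kappa>_def by (rule Kinf_dominate(2)[OF e0])
  have Knn: "0 \<le> r \<Longrightarrow> 0 \<le> \<kappa> r" for r
    unfolding \<kappa>_def by (rule Kinf_dominate(3)[OF e0])
  define C where "C = \<bar>Bd 1\<bar> + 1"
  show ?thesis
  proof (intro exI[of _ C] conjI exI[of _ \<kappa>] K allI ballI)
    show "0 < C" unfolding C_def by simp
    fix i a y w assume a: "a \<in> Vsp (n i)" and y: "y \<in> Xbar n (I i)" and w: "w \<in> Vsp (p i)"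
    define R where "R = max (nx i a) (max (barnorm nx (I i) y) (nu i w))"
    have na: "0 \<le> nx i a" by (rule nrm_nonneg[OF Nn a])
    have ny: "0 \<le> barnorm nx (I i) y" by (rule barnorm_nonneg[OF fin])
    have nw: "0 \<le> nu i w" by (rule nrm_nonneg[OF Np w])
    have R0: "0 \<le> R" unfolding R_def using na by simp
    define k where "k = nat \<lfloor>R\<rfloor>"
    have kR: "real k \<le> R" unfolding k_def using R0 by linarith
    have Rk: "R \<le> real (Suc k)" unfolding k_def using R0 by simp linarith
    have "nx i (fs i a y w) \<le> Bd (Suc k)"
      using Bd0 a y w Rk unfolding R_def by (meson max.boundedE order_trans)
    also have "\<dots> \<le> \<bar>Bd 1\<bar> + (\<Sum>j<k. e j)"
    proof (cases k)
      case 0 then show ?thesis by simp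
    next
      case (Suc k')
      have "0 \<le> (\<Sum>j<k'. e j)" using e0 by (intro sum_nonneg) auto
      moreover have "Bd (Suc k) \<le> e k'" using Suc by (simp add: e_def)
      moreover have "(\<Sum>j<k. e j) = (\<Sum>j<k'. e j) + e k'" using Suc by simp
      ultimately show ?thesis by simp
    qed
    also have "\<dots> \<le> \<bar>Bd 1\<bar> + \<kappa> R" using Klow[OF kR] by simp
    also have "\<kappa> R \<le> \<kappa> (nx i a) + \<kappa> (barnorm nx (I i) y) + \<kappa> (nu i w)"
      using Knn[OF na] Knn[OF ny] Knn[OF nw] unfolding R_def
      by (auto simp: max_def)
    finally show "nx i (fs i a y w) \<le> C + \<kappa> (nx i a) + \<kappa> (barnorm nx (I i) y) + \<kappa> (nu i w)"
      unfolding C_def by simp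
  qed
qed

lemma Kinf_mono: assumes "Kinf \<kappa>" "0 \<le> r" "r \<le> s" shows "\<kappa> r \<le> \<kappa> s"
proof (cases "r = s")
  case True then show ?thesis by simp
next
  case False
  then have "r < s" using assms by simp
  moreover have "strict_mono_on {0..} \<kappa>" using assms(1) unfolding Kinf_def by simp
  ultimately have "\<kappa> r < \<kappa> s" using assms(2,3) by (intro strict_mono_onD[of "{0..}" \<kappa> r s]) auto
  then show ?thesis by simp
qed

lemma Kinf_nonneg: "Kinf \<kappa> \<Longrightarrow> 0 \<le> r \<Longrightarrow> 0 \<le> \<kappa> r"
  using Kinf_mono[of \<kappa> 0 r] unfolding Kinf_def by simp

lemma Kinf_double: assumes "Kinf \<kappa>" shows "Kinf (\<lambda>r. 2 * \<kappa> r)"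
  unfolding Kinf_def
proof (intro conjI)
  show "continuous_on {0..} (\<lambda>r. 2 * \<kappa> r)"
    using assms unfolding Kinf_def by (intro continuous_intros) auto
  show "strict_mono_on {0..} (\<lambda>r. 2 * \<kappa> r)"
    using assms unfolding Kinf_def by (auto intro!: strict_mono_onI dest: strict_mono_onD)
  show "2 * \<kappa> 0 = 0" using assms unfolding Kinf_def by simp
  show "\<forall>M. \<exists>r\<ge>0. M < 2 * \<kappa> r"
  proof
    fix M :: real
    obtain r where "r \<ge> 0" "\<kappa> r > \<bar>M\<bar>" using assms unfolding Kinf_def by blast
    then show "\<exists>r\<ge>0. M < 2 * \<kappa> r" by (intro exI[of _ r]) auto
  qed
qed

lemma restr_Xbar: "x \<in> seqsp n nx \<Longrightarrow> restr I x \<in> Xbar n I"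
  by (auto simp: seqsp_def restr_def Xbar_def Vsp_def)

lemma seqsp_le_sup: assumes "x \<in> seqsp n nx" shows "nx i (x i) \<le> supnorm nx x"
proof -
  obtain B where "\<forall>i. nx i (x i) \<le> B" using assms by (auto simp: seqsp_def)
  then have "bdd_above (range (\<lambda>i. nx i (x i)))" by (auto intro: bdd_aboveI)
  then show ?thesis unfolding supnorm_def using cSUP_upper[of i UNIV "\<lambda>i. nx i (x i)"] by simp
qed



theorem lemma1:
  fixes n p :: "nat \<Rightarrow> nat"
    and nx nu :: "nat \<Rightarrow> (nat \<Rightarrow> real) \<Rightarrow> real"
    and I :: "nat \<Rightarrow> nat set"
    and fs :: "nat \<Rightarrow> (nat \<Rightarrow> real) \<Rightarrow> (nat \<Rightarrow> nat \<Rightarrow> real) \<Rightarrow> (nat \<Rightarrow> real) \<Rightarrow> (nat \<Rightarrow> real)"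
  assumes dims: "\<And>i. n i > 0" "\<And>i. p i > 0"
    and norms: "\<And>i. is_norm_on (n i) (nx i)" "\<And>i. is_norm_on (p i) (nu i)"
    and fin: "\<And>i. finite (I i)"
    and irr: "\<And>i. i \<notin> I i"
    and finrev: "\<And>i. finite {j. i \<in> I j}"
    and maps: "\<And>i a y w. a \<in> Vsp (n i) \<Longrightarrow> y \<in> Xbar n (I i) \<Longrightarrow> w \<in> Vsp (p i)
                 \<Longrightarrow> fs i a y w \<in> Vsp (n i)"
    and cont: "\<And>i. sub_continuous n p nx nu I i (fs i)"
  shows "(well_posed n p nx nu I fs \<longleftrightarrow>
            (well_posed n p nx nu I fs \<and>
             (\<exists>C>0. \<exists>\<kappa>. Kinf \<kappa> \<and>
                (\<forall>x\<in>seqsp n nx. \<forall>u\<in>seqsp p nu.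
                   supnorm nx (netf fs I x u) \<le> C + \<kappa> (supnorm nx x) + \<kappa> (supnorm nu u)))))
       \<and> (well_posed n p nx nu I fs \<longleftrightarrow>
            (\<exists>C>0. \<exists>\<kappa>. Kinf \<kappa> \<and>
               (\<forall>i. \<forall>a\<in>Vsp (n i). \<forall>y\<in>Xbar n (I i). \<forall>w\<in>Vsp (p i).
                  nx i (fs i a y w) \<le> C + \<kappa> (nx i a) + \<kappa> (barnorm nx (I i) y) + \<kappa> (nu i w))))"
proof -
  have wp3: "\<exists>C>0. \<exists>\<kappa>. Kinf \<kappa> \<and>
               (\<forall>i. \<forall>a\<in>Vsp (n i). \<forall>y\<in>Xbar n (I i). \<forall>w\<in>Vsp (p i).
                  nx i (fs i a y w) \<le> C + \<kappa> (nx i a) + \<kappa> (barnorm nx (I i) y) + \<kappa> (nu i w))"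
    if wp: "well_posed n p nx nu I fs"
    by (rule iii_from_wp[OF norms fin irr finrev maps cont wp])
  have bd3: "\<exists>C>0. \<exists>\<kappa>. Kinf \<kappa> \<and>
                (\<forall>x\<in>seqsp n nx. \<forall>u\<in>seqsp p nu.
                   supnorm nx (netf fs I x u) \<le> C + \<kappa> (supnorm nx x) + \<kappa> (supnorm nu u))
         \<and> well_posed n p nx nu I fs"
    if h3: "\<exists>C>0. \<exists>\<kappa>. Kinf \<kappa> \<and>
               (\<forall>i. \<forall>a\<in>Vsp (n i). \<forall>y\<in>Xbar n (I i). \<forall>w\<in>Vsp (p i).
                  nx i (fs i a y w) \<le> C + \<kappa> (nx i a) + \<kappa> (barnorm nx (I i) y) + \<kappa> (nu i w))"
  proof -
    obtain C \<kappa> where C: "C > 0" and K: "Kinf \<kappa>" and bd: "\<And>i a y w. a\<in>Vsp (n i) \<Longrightarrow> y\<in>Xbar n (I i) \<Longrightarrow>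
        w\<in>Vsp (p i) \<Longrightarrow> nx i (fs i a y w) \<le> C + \<kappa> (nx i a) + \<kappa> (barnorm nx (I i) y) + \<kappa> (nu i w)"
      using h3 by blast
    have comp: "nx i (netf fs I x u i) \<le> C + \<kappa> Bx + \<kappa> Bx + \<kappa> Bu \<and> netf fs I x u i \<in> Vsp (n i)"
      if xs: "x \<in> seqsp n nx" and us: "u \<in> seqsp p nu" and Bx: "\<And>j. nx j (x j) \<le> Bx"
        and Bu: "\<And>j. nu j (u j) \<le> Bu" for x u Bx Bu i
    proof -
      have xi: "x i \<in> Vsp (n i)" using xs by (auto simp: seqsp_def)
      have ui: "u i \<in> Vsp (p i)" using us by (auto simp: seqsp_def)
      have rx: "restr (I i) x \<in> Xbar n (I i)" by (rule restr_Xbar[OF xs])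
      have nxi: "0 \<le> nx i (x i)" by (rule nrm_nonneg[OF norms(1) xi])
      have nui: "0 \<le> nu i (u i)" by (rule nrm_nonneg[OF norms(2) ui])
      have Bx0: "0 \<le> Bx" using nxi Bx[of i] by simp
      have bn0: "0 \<le> barnorm nx (I i) (restr (I i) x)" by (rule barnorm_nonneg[OF fin])
      have bnB: "barnorm nx (I i) (restr (I i) x) \<le> Bx"
        by (rule barnorm_le[OF fin Bx0]) (simp add: restr_def Bx)
      have "nx i (netf fs I x u i) \<le> C + \<kappa> (nx i (x i)) + \<kappa> (barnorm nx (I i) (restr (I i) x)) + \<kappa> (nu i (u i))"
        unfolding netf_def by (rule bd[OF xi rx ui])
      also have "\<dots> \<le> C + \<kappa> Bx + \<kappa> Bx + \<kappa> Bu"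
        using Kinf_mono[OF K nxi Bx[of i]] Kinf_mono[OF K bn0 bnB] Kinf_mono[OF K nui Bu[of i]] by simp
      finally show ?thesis unfolding netf_def using maps[OF xi rx ui] by simp
    qed
    have wp: "well_posed n p nx nu I fs"
      unfolding well_posed_def
    proof (intro ballI)
      fix x u assume xs: "x \<in> seqsp n nx" and us: "u \<in> seqsp p nu"
      obtain Bx where Bx: "\<And>j. nx j (x j) \<le> Bx" using xs by (auto simp: seqsp_def)
      obtain Bu where Bu: "\<And>j. nu j (u j) \<le> Bu" using us by (auto simp: seqsp_def)
      show "netf fs I x u \<in> seqsp n nx"
        unfolding seqsp_def using comp[OF xs us Bx Bu] by blast
    qed
    have b2: "\<forall>x\<in>seqsp n nx. \<forall>u\<in>seqsp p nu.
                   supnorm nx (netf fs I x u) \<le> C + 2 * \<kappa> (supnorm nx x) + 2 * \<kappa> (supnorm nu u)"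
    proof (intro ballI)
      fix x u assume xs: "x \<in> seqsp n nx" and us: "u \<in> seqsp p nu"
      have Bx: "\<And>j. nx j (x j) \<le> supnorm nx x" by (rule seqsp_le_sup[OF xs])
      have Bu: "\<And>j. nu j (u j) \<le> supnorm nu u" by (rule seqsp_le_sup[OF us])
      have su0: "0 \<le> supnorm nu u"
        using Bu[of 0] nrm_nonneg[OF norms(2), of "u 0" 0] us by (auto simp: seqsp_def)
      have ku: "0 \<le> \<kappa> (supnorm nu u)" by (rule Kinf_nonneg[OF K su0])
      have "supnorm nx (netf fs I x u) \<le> C + \<kappa> (supnorm nx x) + \<kappa> (supnorm nx x) + \<kappa> (supnorm nu u)"
        unfolding supnorm_def[of nx "netf fs I x u"]
        using comp[OF xs us Bx Bu] by (intro cSUP_least) auto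
      then show "supnorm nx (netf fs I x u) \<le> C + 2 * \<kappa> (supnorm nx x) + 2 * \<kappa> (supnorm nu u)"
        using ku by simp
    qed
    show ?thesis using C Kinf_double[OF K] b2 wp by blast
  qed
  show ?thesis using wp3 bd3 by blast
qed

end
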